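(* Let $R$ be a finite chain ring with maximal ideal $\langle\gamma\rangle$ where $\gamma$ has odd nilpotency index $e$, and residue field $\mathbb F_q$. Then for every positive integer $n$ with $\gcd(n,q)=1$ there is no self-dual cyclic code of length $n$ over $R$.
   Context: A finite chain ring is a finite commutative local ring whose ideals are linearly ordered; its maximal ideal is generated by a nilpotent $\gamma$ of nilpotency index $e$, with residue field $R/\langle\gamma\rangle$. A code of length $n$ is an $R$-submodule of $R^n$; cyclic means closed under cyclic shift; self-dual means $C=C^\perp$ for the standard inner product $[u,v]=\sum u_iv_i$. *)

theory Defs
  imports Main
begin

definition ring_ideal :: "'a::comm_ring_1 set \<Rightarrow> bool" where
  "ring_ideal I \<longleftrightarrow> 0 \<in> I \<and> (\<forall>x\<in>I. \<forall>y\<in>I. x + y \<in> I) \<and> (\<forall>r x. x \<in> I \<longrightarrow> r * x \<in> I)"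

definition principal_ideal :: "'a::comm_ring_1 \<Rightarrow> 'a set" where
  "principal_ideal g = {r * g | r. True}"

definition maximal_ideal :: "'a::comm_ring_1 set \<Rightarrow> bool" where
  "maximal_ideal I \<longleftrightarrow> ring_ideal I \<and> I \<noteq> UNIV \<and>
     (\<forall>J. ring_ideal J \<and> I \<subseteq> J \<longrightarrow> J = I \<or> J = UNIV)"

definition local_ring :: "'a::comm_ring_1 itself \<Rightarrow> bool" where
  "local_ring _ \<longleftrightarrow> (\<exists>!I::'a set. maximal_ideal I)"

definition finite_chain_ring :: "'a::comm_ring_1 itself \<Rightarrow> bool" where
  "finite_chain_ring T \<longleftrightarrow> finite (UNIV :: 'a set) \<and> local_ring T \<and>
     (\<forall>I J :: 'a set. ring_ideal I \<and> ring_ideal J \<longrightarrow> I \<subseteq> J \<or> J \<subseteq> I)"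

definition nilpotency_index :: "'a::comm_ring_1 \<Rightarrow> nat \<Rightarrow> bool" where
  "nilpotency_index g e \<longleftrightarrow> g ^ e = 0 \<and> (\<forall>k<e. g ^ k \<noteq> 0)"

definition quotient_card :: "'a::comm_ring_1 set \<Rightarrow> nat" where
  "quotient_card M = card ((\<lambda>x. (\<lambda>m. x + m) ` M) ` (UNIV :: 'a set))"

definition vecs :: "nat \<Rightarrow> (nat \<Rightarrow> 'a::comm_ring_1) set" where
  "vecs n = {v. \<forall>i\<ge>n. v i = 0}"

definition linear_code :: "nat \<Rightarrow> (nat \<Rightarrow> 'a::comm_ring_1) set \<Rightarrow> bool" where
  "linear_code n C \<longleftrightarrow> C \<subseteq> vecs n \<and> (\<lambda>_. 0) \<in> C \<and>
     (\<forall>u\<in>C. \<forall>v\<in>C. (\<lambda>i. u i + v i) \<in> C) \<and>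
     (\<forall>r. \<forall>v\<in>C. (\<lambda>i. r * v i) \<in> C)"

definition cyclic_shift :: "nat \<Rightarrow> (nat \<Rightarrow> 'a::comm_ring_1) \<Rightarrow> nat \<Rightarrow> 'a" where
  "cyclic_shift n v = (\<lambda>i. if i < n then v ((i + n - 1) mod n) else 0)"

definition cyclic_code :: "nat \<Rightarrow> (nat \<Rightarrow> 'a::comm_ring_1) set \<Rightarrow> bool" where
  "cyclic_code n C \<longleftrightarrow> linear_code n C \<and> (\<forall>v\<in>C. cyclic_shift n v \<in> C)"

definition inner_prod :: "nat \<Rightarrow> (nat \<Rightarrow> 'a::comm_ring_1) \<Rightarrow> (nat \<Rightarrow> 'a) \<Rightarrow> 'a" where
  "inner_prod n u v = (\<Sum>i<n. u i * v i)"

definition dual_code :: "nat \<Rightarrow> (nat \<Rightarrow> 'a::comm_ring_1) set \<Rightarrow> (nat \<Rightarrow> 'a) set" where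
  "dual_code n C = {v \<in> vecs n. \<forall>u\<in>C. inner_prod n u v = 0}"

definition self_dual :: "nat \<Rightarrow> (nat \<Rightarrow> 'a::comm_ring_1) set \<Rightarrow> bool" where
  "self_dual n C \<longleftrightarrow> C = dual_code n C"

end

theory Submission imports Defs begin

lemma pi_ideal: "ring_ideal (principal_ideal (g::'a::comm_ring_1))"
  unfolding ring_ideal_def principal_ideal_def
  apply (intro conjI)
    apply (rule CollectI, rule exI[of _ 0], simp)
   apply clarify
   apply (clarsimp, rule_tac x="r+ra" in exI, simp add: distrib_right)
  apply (clarsimp, rule_tac x="r*ra" in exI, simp add: mult.assoc)
  done

lemma pi_mem: "(g::'a::comm_ring_1) \<in> principal_ideal g"
  unfolding principal_ideal_def by (rule CollectI, rule exI[of _ 1], simp)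

lemma pi_memI: "r * (g::'a::comm_ring_1) \<in> principal_ideal g"
  unfolding principal_ideal_def by blast

lemma nonunit_in_max:
  fixes r g :: "'a::comm_ring_1"
  assumes chain: "\<forall>I J :: 'a set. ring_ideal I \<and> ring_ideal J \<longrightarrow> I \<subseteq> J \<or> J \<subseteq> I"
    and max: "maximal_ideal (principal_ideal g)"
  shows "r \<in> principal_ideal g \<or> (\<exists>u. u * r = 1)"
proof (cases "r \<in> principal_ideal g")
  case False
  have "principal_ideal r \<subseteq> principal_ideal g \<or> principal_ideal g \<subseteq> principal_ideal r"
    using chain pi_ideal by blast
  then have "principal_ideal g \<subseteq> principal_ideal r" using False pi_mem by blast
  then have "principal_ideal r = principal_ideal g \<or> principal_ideal r = UNIV"
    using max pi_ideal unfolding maximal_ideal_def by blast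
  then have "1 \<in> principal_ideal r" using False pi_mem by blast
  then show ?thesis unfolding principal_ideal_def by auto
qed simp

lemma alg_contra:
  fixes \<gamma> :: "'a::comm_ring_1" and S :: "'a set"
  assumes chain: "\<forall>I J :: 'a set. ring_ideal I \<and> ring_ideal J \<longrightarrow> I \<subseteq> J \<or> J \<subseteq> I"
    and max: "maximal_ideal (principal_ideal \<gamma>)"
    and e0: "\<gamma> ^ (2*m+1) = 0" and nz: "\<gamma> ^ (2*m) \<noteq> 0"
    and S: "ring_ideal S" and SS: "\<And>s t. s \<in> S \<Longrightarrow> t \<in> S \<Longrightarrow> s * t = 0"
    and Ann: "\<And>a. (\<forall>s\<in>S. a * s = 0) \<Longrightarrow> a \<in> S"
  shows False
proof -
  have gm: "\<gamma>^m \<in> S"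
  proof (cases "\<exists>s\<in>S. \<gamma>^m * s \<noteq> 0")
    case True
    then obtain s where s: "s \<in> S" "\<gamma>^m * s \<noteq> 0" by blast
    have "principal_ideal (\<gamma>^m) \<subseteq> S \<or> S \<subseteq> principal_ideal (\<gamma>^m)"
      using chain pi_ideal S by blast
    then show ?thesis
    proof
      assume "principal_ideal (\<gamma>^m) \<subseteq> S" then show ?thesis using pi_mem by blast
    next
      assume "S \<subseteq> principal_ideal (\<gamma>^m)"
      then obtain r where r: "s = r * \<gamma>^m" using s unfolding principal_ideal_def by blast
      from nonunit_in_max[OF chain max, of r] show ?thesis
      proof
        assume "r \<in> principal_ideal \<gamma>"
        then obtain t where "r = t * \<gamma>" unfolding principal_ideal_def by blast
        moreover have "\<gamma>^(2*m+1) = \<gamma> * \<gamma>^m * \<gamma>^m" by (simp add: mult_2 power_add)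
        ultimately have "\<gamma>^m * s = t * \<gamma>^(2*m+1)" using r by (simp add: power_add mult_2 mult.commute mult.left_commute)
        then show ?thesis using s e0 by simp
      next
        assume "\<exists>u. u * r = 1"
        then obtain u where "u * r = 1" by blast
        then have "\<gamma>^m = u * s" using r by (metis mult.assoc mult_1)
        then show ?thesis using S s unfolding ring_ideal_def by simp
      qed
    qed
  next
    case False then show ?thesis using Ann by blast
  qed
  have "\<gamma>^m * \<gamma>^m = 0" using SS gm by blast
  then show False using nz by (simp add: mult_2 power_add)
qed

lemma ideal_sum:
  assumes I: "ring_ideal I" and "finite A" and "\<And>x. x \<in> A \<Longrightarrow> f x \<in> I"
  shows "sum f A \<in> I"
  using assms(2,3)
proof (induction A rule: finite_induct)
  case empty then show ?case using I unfolding ring_ideal_def by simp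
next
  case (insert x F) then show ?case using I unfolding ring_ideal_def by simp
qed

lemma ideal_neg: "ring_ideal I \<Longrightarrow> x \<in> I \<Longrightarrow> - x \<in> I"
proof -
  assume "ring_ideal I" "x \<in> I"
  then have "(-1) * x \<in> I" unfolding ring_ideal_def by blast
  then show ?thesis by simp
qed

lemma ideal_add: "ring_ideal I \<Longrightarrow> x \<in> I \<Longrightarrow> y \<in> I \<Longrightarrow> x + y \<in> I"
  unfolding ring_ideal_def by blast

lemma ideal_mult: "ring_ideal I \<Longrightarrow> x \<in> I \<Longrightarrow> r * x \<in> I"
  unfolding ring_ideal_def by blast

lemma ideal_diff: "ring_ideal I \<Longrightarrow> x \<in> I \<Longrightarrow> y \<in> I \<Longrightarrow> x - y \<in> I"
  using ideal_neg[of I y] ideal_add[of I x "-y"] by simp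

lemma coset_eq:
  fixes M :: "'a::comm_ring_1 set"
  assumes M: "ring_ideal M"
  shows "((\<lambda>m. x + m) ` M = (\<lambda>m. y + m) ` M) \<longleftrightarrow> x - y \<in> M"
proof
  assume h: "(\<lambda>m. x + m) ` M = (\<lambda>m. y + m) ` M"
  have "0 \<in> M" using M unfolding ring_ideal_def by blast
  then have "x + 0 \<in> (\<lambda>m. x + m) ` M" by (rule imageI)
  then have "x + 0 \<in> (\<lambda>m. y + m) ` M" using h by simp
  then obtain m where "m \<in> M" "x = y + m" by auto
  then show "x - y \<in> M" by simp
next
  assume d: "x - y \<in> M"
  show "(\<lambda>m. x + m) ` M = (\<lambda>m. y + m) ` M"
  proof (intro equalityI subsetI)
    fix z assume "z \<in> (\<lambda>m. x + m) ` M"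
    then obtain m where m: "m \<in> M" "z = x + m" by auto
    have "(x - y) + m \<in> M" using ideal_add[OF M d m(1)] .
    moreover have "z = y + ((x - y) + m)" using m by simp
    ultimately show "z \<in> (\<lambda>m. y + m) ` M" by blast
  next
    fix z assume "z \<in> (\<lambda>m. y + m) ` M"
    then obtain m where m: "m \<in> M" "z = y + m" by auto
    have "m - (x - y) \<in> M" using ideal_diff[OF M m(1) d] .
    moreover have "z = x + (m - (x - y))" using m by simp
    ultimately show "z \<in> (\<lambda>m. x + m) ` M" by blast
  qed
qed

lemma qcard_in:
  fixes M :: "'a::comm_ring_1 set"
  assumes fin: "finite (UNIV :: 'a set)" and M: "ring_ideal M"
  shows "of_nat (quotient_card M) \<in> M"
proof -
  define cs where "cs x = (\<lambda>m. x + m) ` M" for x :: 'a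
  define Q where "Q = range cs"
  have qc: "quotient_card M = card Q" unfolding Q_def cs_def quotient_card_def by simp
  have finQ: "finite Q" unfolding Q_def using fin by simp
  define rep where "rep c = (SOME x. cs x = c)" for c
  have rep: "cs (rep c) = c" if "c \<in> Q" for c
    using that unfolding Q_def rep_def by (metis (mono_tags, lifting) imageE someI_ex)
  define f where "f c = cs (rep c + 1)" for c
  have fQ: "f ` Q \<subseteq> Q" unfolding f_def Q_def by auto
  have inj: "inj_on f Q"
  proof
    fix c d assume c: "c \<in> Q" and d: "d \<in> Q" and "f c = f d"
    then have "(rep c + 1) - (rep d + 1) \<in> M" using coset_eq[OF M] unfolding f_def cs_def by blast
    then have "rep c - rep d \<in> M" by simp
    then have "cs (rep c) = cs (rep d)" using coset_eq[OF M] unfolding cs_def by blast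
    then show "c = d" using rep c d by simp
  qed
  have img: "f ` Q = Q" using endo_inj_surj[OF finQ fQ inj] .
  have s1: "(\<Sum>c\<in>Q. rep (f c)) = (\<Sum>c\<in>Q. rep c)"
    using sum.reindex[OF inj, of rep] img by simp
  have mem: "rep (f c) - (rep c + 1) \<in> M" if "c \<in> Q" for c
  proof -
    have "f c \<in> Q" using fQ that by blast
    then have "cs (rep (f c)) = cs (rep c + 1)" using rep unfolding f_def by simp
    then show ?thesis using coset_eq[OF M] unfolding cs_def by blast
  qed
  have "(\<Sum>c\<in>Q. rep (f c) - (rep c + 1)) \<in> M" using ideal_sum[OF M finQ mem] .
  moreover have "(\<Sum>c\<in>Q. rep (f c) - (rep c + 1)) = - of_nat (card Q)"
    using s1 by (simp add: sum_subtractf sum.distrib)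
  ultimately have "- of_nat (card Q) \<in> M" by simp
  then have "- (- of_nat (card Q)) \<in> M" using ideal_neg[OF M] by blast
  then show ?thesis using qc by simp
qed

lemma n_unit:
  fixes \<gamma> :: "'a::comm_ring_1"
  assumes fin: "finite (UNIV :: 'a set)"
    and chain: "\<forall>I J :: 'a set. ring_ideal I \<and> ring_ideal J \<longrightarrow> I \<subseteq> J \<or> J \<subseteq> I"
    and max: "maximal_ideal (principal_ideal \<gamma>)"
    and cop: "coprime n (quotient_card (principal_ideal \<gamma>))"
  shows "\<exists>u. u * (of_nat n :: 'a) = 1"
proof -
  let ?M = "principal_ideal \<gamma>"
  let ?q = "quotient_card ?M"
  have M: "ring_ideal ?M" by (rule pi_ideal)
  have "of_nat n \<notin> ?M"
  proof
    assume nM: "(of_nat n :: 'a) \<in> ?M"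
    have qM: "(of_nat ?q :: 'a) \<in> ?M" using qcard_in[OF fin M] .
    have "coprime (int n) (int ?q)" using cop by simp
    then obtain u v where uv: "u * int n + v * int ?q = 1"
      using bezout_int[of "int n" "int ?q"] by (metis coprime_imp_gcd_eq_1)
    have "(of_int u * of_nat n + of_int v * of_nat ?q :: 'a) \<in> ?M"
      using ideal_add[OF M ideal_mult[OF M nM] ideal_mult[OF M qM]] .
    moreover have "(of_int u * of_nat n + of_int v * of_nat ?q :: 'a) = of_int (u * int n + v * int ?q)"
      by simp
    ultimately have "(1::'a) \<in> ?M" using uv by simp
    then have "?M = UNIV" using M using ideal_mult[OF M] by (metis UNIV_eq_I mult_1_right)
    then show False using max unfolding maximal_ideal_def by blast
  qed
  then show ?thesis using nonunit_in_max[OF chain max, of "of_nat n"] by blast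
qed
lemma inj_aux:
  assumes "(i::nat) < n" "k < n" "k' < n" "(i + k*(n-1)) mod n = (i + k'*(n-1)) mod n"
  shows "k = k'"
proof -
  have n: "n > 0" using assms by simp
  have "int n dvd int (i + k*(n-1)) - int (i + k'*(n-1))"
    using assms(4) by (metis of_nat_mod mod_eq_dvd_iff)
  moreover have "int (i + k*(n-1)) - int (i + k'*(n-1)) = (int k - int k') * (int n - 1)"
  proof -
    have "int (n - 1) = int n - 1" using n by simp
    then have "int (i + k*(n-1)) = int i + int k * (int n - 1)" "int (i + k'*(n-1)) = int i + int k' * (int n - 1)"
      by (simp_all only: of_nat_add of_nat_mult)
    then show ?thesis by (simp add: algebra_simps)
  qed
  ultimately have "int n dvd (int k - int k') * (int n - 1)" by simp
  moreover have "int n dvd (int k - int k') * int n" by simp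
  ultimately have "int n dvd (int k - int k') * int n - (int k - int k') * (int n - 1)"
    using dvd_diff by blast
  then have d: "int n dvd (int k - int k')" by (simp add: algebra_simps)
  have "\<bar>int k - int k'\<bar> < int n" using assms by simp
  then have "int k - int k' = 0" using d dvd_imp_le_int by (metis abs_dvd_iff abs_of_nat dvd_imp_le_int not_less)
  then show ?thesis by simp
qed

lemma shift_pow:
  assumes n: "0 < n" and v: "v \<in> vecs n"
  shows "i < n \<Longrightarrow> (cyclic_shift n ^^ k) v i = v ((i + k*(n-1)) mod n)"
proof (induction k arbitrary: i)
  case 0 then show ?case by simp
next
  case (Suc k)
  have lt: "(i + n - 1) mod n < n" using n by simp
  have "(cyclic_shift n ^^ Suc k) v i = (cyclic_shift n ^^ k) v ((i + n - 1) mod n)"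
    using Suc.prems by (simp add: cyclic_shift_def)
  also have "\<dots> = v (((i + n - 1) mod n + k*(n-1)) mod n)" using Suc.IH[OF lt] .
  also have "((i + n - 1) mod n + k*(n-1)) mod n = (i + n - 1 + k*(n-1)) mod n"
    by (simp add: mod_add_left_eq)
  also have "i + n - 1 + k*(n-1) = i + Suc k * (n-1)" using n by simp
  finally show ?case .
qed

lemma shift_pow_in:
  assumes "cyclic_code n C" "v \<in> C"
  shows "(cyclic_shift n ^^ k) v \<in> C"
  using assms by (induction k) (auto simp: cyclic_code_def)

lemma sum_in_code:
  fixes N :: nat
  assumes "linear_code n C" "\<And>k. k < N \<Longrightarrow> f k \<in> C"
  shows "(\<lambda>i. \<Sum>k<N. f k i) \<in> C"
  using assms(2)
proof (induction N)
  case 0 then show ?case using assms(1) by (simp add: linear_code_def)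
next
  case (Suc N)
  have "(\<lambda>i. (\<Sum>k<N. f k i) + f N i) \<in> C"
    using Suc assms(1) unfolding linear_code_def by simp
  then show ?case by simp
qed

lemma perm_sum:
  fixes v :: "nat \<Rightarrow> 'a::comm_ring_1"
  assumes "i < n"
  shows "(\<Sum>k<n. v ((i + k*(n-1)) mod n)) = (\<Sum>j<n. v j)"
proof -
  define g where "g k = (i + k*(n-1)) mod n" for k
  have inj: "inj_on g {..<n}" unfolding g_def inj_on_def using inj_aux assms by blast
  have sub: "g ` {..<n} \<subseteq> {..<n}" using assms unfolding g_def by auto
  have img: "g ` {..<n} = {..<n}" using endo_inj_surj[OF _ sub inj] by simp
  show ?thesis using sum.reindex[OF inj, of v] img unfolding g_def by simp
qed

lemma const_in:
  assumes cc: "cyclic_code n C" and n: "0 < n" and v: "v \<in> C"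
  shows "(\<lambda>i. if i < n then (\<Sum>j<n. v j) else 0) \<in> C"
proof -
  have lc: "linear_code n C" using cc by (simp add: cyclic_code_def)
  have vv: "v \<in> vecs n" using lc v by (auto simp: linear_code_def)
  have w: "(\<lambda>i. \<Sum>k<n. (cyclic_shift n ^^ k) v i) \<in> C"
    using sum_in_code[OF lc shift_pow_in[OF cc v]] .
  have "(\<lambda>i. \<Sum>k<n. (cyclic_shift n ^^ k) v i) = (\<lambda>i. if i < n then (\<Sum>j<n. v j) else 0)"
  proof
    fix i show "(\<Sum>k<n. (cyclic_shift n ^^ k) v i) = (if i < n then (\<Sum>j<n. v j) else 0)"
    proof (cases "i < n")
      case True
      then show ?thesis using shift_pow[OF n vv] perm_sum[OF True, of v] by simp
    next
      case False
      have "(cyclic_shift n ^^ k) v \<in> vecs n" for k using shift_pow_in[OF cc v] lc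
        by (auto simp: linear_code_def)
      then show ?thesis using False by (simp add: vecs_def)
    qed
  qed
  then show ?thesis using w by simp
qed

theorem mainTheorem16:
  fixes \<gamma> :: "'a::comm_ring_1" and e q n :: nat
  assumes "finite_chain_ring TYPE('a)"
    and "maximal_ideal (principal_ideal \<gamma>)"
    and "nilpotency_index \<gamma> e"
    and "odd e"
    and "q = quotient_card (principal_ideal \<gamma>)"
    and "n > 0"
    and "coprime n q"
  shows "\<not> (\<exists>C :: (nat \<Rightarrow> 'a) set. cyclic_code n C \<and> self_dual n C)"
proof
  assume "\<exists>C :: (nat \<Rightarrow> 'a) set. cyclic_code n C \<and> self_dual n C"
  then obtain C :: "(nat \<Rightarrow> 'a) set" where cc: "cyclic_code n C" and sd: "C = dual_code n C"
    unfolding self_dual_def by blast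
  have fin: "finite (UNIV :: 'a set)" and chain: "\<forall>I J :: 'a set. ring_ideal I \<and> ring_ideal J \<longrightarrow> I \<subseteq> J \<or> J \<subseteq> I"
    using assms(1) unfolding finite_chain_ring_def by auto
  obtain m where em: "e = 2*m+1" using assms(4) oddE by blast
  have e0: "\<gamma>^(2*m+1) = 0" and nz: "\<gamma>^(2*m) \<noteq> 0" using assms(3) em unfolding nilpotency_index_def by auto
  obtain w where w: "w * (of_nat n :: 'a) = 1"
    using n_unit[OF fin chain assms(2)] assms(5,7) by blast
  have lc: "linear_code n C" using cc by (simp add: cyclic_code_def)
  define S where "S = {(\<Sum>j<n. v j) | v. v \<in> C}"
  have Sid: "ring_ideal S"
    unfolding ring_ideal_def
  proof (intro conjI ballI allI impI)
    have "(\<lambda>_. 0) \<in> C" using lc by (simp add: linear_code_def)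
    then show "0 \<in> S" unfolding S_def by force
  next
    fix x y assume "x \<in> S" "y \<in> S"
    then obtain u v where uv: "u \<in> C" "v \<in> C" "x = (\<Sum>j<n. u j)" "y = (\<Sum>j<n. v j)" unfolding S_def by blast
    have "(\<lambda>i. u i + v i) \<in> C" using lc uv by (simp add: linear_code_def)
    moreover have "x + y = (\<Sum>j<n. (\<lambda>i. u i + v i) j)" using uv by (simp add: sum.distrib)
    ultimately show "x + y \<in> S" unfolding S_def by blast
  next
    fix r x assume "x \<in> S"
    then obtain u where uv: "u \<in> C" "x = (\<Sum>j<n. u j)" unfolding S_def by blast
    have "(\<lambda>i. r * u i) \<in> C" using lc uv by (simp add: linear_code_def)
    moreover have "r * x = (\<Sum>j<n. (\<lambda>i. r * u i) j)" using uv by (simp add: sum_distrib_left)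
    ultimately show "r * x \<in> S" unfolding S_def by blast
  qed
  have SS: "s * t = 0" if st: "s \<in> S" "t \<in> S" for s t
  proof -
    obtain u v where uv: "u \<in> C" "v \<in> C" "s = (\<Sum>j<n. u j)" "t = (\<Sum>j<n. v j)"
      using st unfolding S_def by blast
    have "(\<lambda>i. if i < n then t else 0) \<in> C" unfolding uv(4) by (rule const_in[OF cc assms(6) uv(2)])
    then have "(\<lambda>i. if i < n then t else 0) \<in> dual_code n C" using sd by simp
    then have "inner_prod n u (\<lambda>i. if i < n then t else 0) = 0" using uv(1) unfolding dual_code_def by blast
    moreover have "inner_prod n u (\<lambda>i. if i < n then t else 0) = s * t"
      unfolding inner_prod_def using uv by (simp add: sum_distrib_right)
    ultimately show ?thesis by simp
  qed
  have Ann: "a \<in> S" if h: "\<forall>s\<in>S. a * s = 0" for a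
  proof -
    define A where "A = (\<lambda>i. if i < n then a else (0::'a))"
    have "A \<in> vecs n" unfolding A_def vecs_def by simp
    moreover have "inner_prod n u A = 0" if u: "u \<in> C" for u
    proof -
      have "(\<Sum>j<n. u j) \<in> S" using u unfolding S_def by blast
      then have "a * (\<Sum>j<n. u j) = 0" using h by blast
      moreover have "inner_prod n u A = (\<Sum>j<n. u j) * a"
        unfolding inner_prod_def A_def by (simp add: sum_distrib_right)
      ultimately show ?thesis by (simp add: mult.commute)
    qed
    ultimately have "A \<in> dual_code n C" unfolding dual_code_def by blast
    then have "A \<in> C" using sd by simp
    then have "(\<Sum>j<n. A j) \<in> S" unfolding S_def by blast
    moreover have "(\<Sum>j<n. A j) = of_nat n * a" unfolding A_def by simp
    ultimately have "w * (of_nat n * a) \<in> S" using ideal_mult[OF Sid] by simp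
    then show "a \<in> S" using w by (simp add: mult.assoc[symmetric])
  qed
  show False using alg_contra[OF chain assms(2) e0 nz Sid SS Ann] by blast
qed

end
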